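(* Let $A$ be a binary $n\times m$ matrix with $R_{\mathbb{R}}(A)=R_{binary}(A)$. If $x_1,\dots,x_t$ are binary column vectors of length $n$ such that $R_{binary}(A|x_i)=R_{binary}(A)$ for all $1\le i\le t$, then $R_{\mathbb{R}}(A|x_1,\dots,x_t)=R_{\mathbb{R}}(A)$.
   Context: $R_{\mathbb{R}}$ is the usual rank over the reals. $R_{binary}(M)$ for a binary $p\times q$ matrix $M$ is the least $k$ with $M=UV$, $U\in\{0,1\}^{p\times k}$, $V\in\{0,1\}^{k\times q}$, ordinary arithmetic. $(A|x_1,\dots,x_t)$ denotes $A$ with the columns $x_1,\dots,x_t$ appended on the right. *)

theory Defs
  imports "Jordan_Normal_Form.DL_Rank"
begin

definition binary_mat :: "real mat \<Rightarrow> bool" where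
  "binary_mat M \<longleftrightarrow> (\<forall>i < dim_row M. \<forall>j < dim_col M. M $$ (i,j) \<in> {0,1})"

definition binary_vec :: "real vec \<Rightarrow> bool" where
  "binary_vec v \<longleftrightarrow> (\<forall>i < dim_vec v. v $ i \<in> {0,1})"

definition real_rank :: "real mat \<Rightarrow> nat" where
  "real_rank M = vec_space.rank (dim_row M) M"

(* Binary rank: least k with M = U * V, U binary p x k, V binary k x q,
   ordinary real arithmetic. *)
definition binary_rank :: "real mat \<Rightarrow> nat" where
  "binary_rank M = (LEAST k. \<exists>U V. U \<in> carrier_mat (dim_row M) k \<and>
      V \<in> carrier_mat k (dim_col M) \<and> binary_mat U \<and> binary_mat V \<and> M = U * V)"

definition append_columns :: "real mat \<Rightarrow> real vec list \<Rightarrow> real mat" where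
  "append_columns A xs = mat_of_cols (dim_row A) (cols A @ xs)"

end

theory Submission
  imports Defs
begin
context vec_space begin

lemma rank_mono_span:
  assumes A: "A \<in> carrier_mat n a" and B: "B \<in> carrier_mat n b"
    and sub: "set (cols A) \<subseteq> span (set (cols B))"
  shows "rank A \<le> rank B"
proof -
  have cA: "set (cols A) \<subseteq> carrier_vec n" using A cols_dim by (metis carrier_matD(1))
  have cB: "set (cols B) \<subseteq> carrier_vec n" using B cols_dim by (metis carrier_matD(1))
  have incl: "span (set (cols A)) \<subseteq> span (set (cols B))" using span_subsetI[OF cB sub] .
  have s1: "subspace class_ring (span (set (cols B))) V" using span_is_subspace cB by auto
  have s2: "subspace class_ring (span (set (cols A))) V" using span_is_subspace cA by auto
  have subsp: "subspace class_ring (span (set (cols A))) (vs (span (set (cols B))))"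
    using nested_subspaces[OF s1 s2 incl] .
  have fB: "vectorspace.fin_dim class_ring (vs (span (set (cols B))))" using fin_dim_span_cols B by blast
  have fA: "vectorspace.fin_dim class_ring (span_vs (set (cols A)))" using fin_dim_span_cols A by blast
  show ?thesis unfolding rank_def
    using vectorspace.subspace_dim[OF subspace_is_vs[OF s1] subsp fB] fA by auto
qed

lemma in_span_of_rank:
  assumes A: "A \<in> carrier_mat n a" and x: "x \<in> carrier_vec n"
    and r: "rank (mat_of_cols n (cols A @ [x])) \<le> rank A"
  shows "x \<in> span (set (cols A))"
proof (rule ccontr)
  assume nx: "x \<notin> span (set (cols A))"
  have cA: "set (cols A) \<subseteq> carrier_vec n" using A cols_dim by (metis carrier_matD(1))
  obtain S where S: "maximal S (\<lambda>T. T \<subseteq> set (cols A) \<and> lin_indpt T)" "finite S"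
    using maximal_exists_superset[of "set (cols A)" "(\<lambda>T. T \<subseteq> set (cols A) \<and> lin_indpt T)" "{}"]
    by (auto simp: lin_dep_def)
  have SA: "S \<subseteq> set (cols A)" "lin_indpt S" using S(1) unfolding maximal_def by auto
  have rA: "rank A = card S" using rank_card_indpt[OF A S(1)] .
  have Sc: "S \<subseteq> carrier_vec n" using SA cA by auto
  have xS: "x \<notin> S" using nx SA(1) span_mem cA by blast
  have "x \<notin> span S" using nx span_is_monotone[OF SA(1)] by blast
  hence li: "lin_indpt (S \<union> {x})" using lin_dep_iff_in_span[OF Sc SA(2) x xS] by simp
  define M where "M = mat_of_cols n (cols A @ [x])"
  have M: "M \<in> carrier_mat n (length (cols A @ [x]))" unfolding M_def by (rule mat_of_cols_carrier(1))
  have cM: "cols M = cols A @ [x]" unfolding M_def using cA x by (intro cols_mat_of_cols) auto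
  have "S \<union> {x} \<subseteq> set (cols M)" using cM SA by auto
  from rank_ge_card_indpt[OF M this li]
  have "card (S \<union> {x}) \<le> rank M" .
  moreover have "card (S \<union> {x}) = card S + 1" using xS S(2) by simp
  ultimately show False using r rA unfolding M_def by simp
qed

lemma cols_prod_in_span:
  assumes Z: "Z \<in> carrier_mat n k" and W: "W \<in> carrier_mat k a"
  shows "set (cols (Z * W)) \<subseteq> span (set (cols Z))"
proof
  fix c assume "c \<in> set (cols (Z * W))"
  then obtain j where j: "j < a" "c = col (Z * W) j" using Z W
    by (metis cols_length cols_nth in_set_conv_nth carrier_matD(2) index_mult_mat(3))
  have "c = Z *\<^sub>v col W j" using j(2) col_mult2[OF Z W j(1)] by simp
  moreover have "col W j \<in> carrier_vec (dim_col Z)" using Z W j by auto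
  ultimately have "c \<in> col_space Z" unfolding col_space_eq[OF Z] using Z by auto
  thus "c \<in> span (set (cols Z))" unfolding col_space_def .
qed
end

lemma binary_one: "binary_mat (1\<^sub>m k)"
  unfolding binary_mat_def by auto

lemma append_col_entries:
  assumes A: "A \<in> carrier_mat n m" and x: "x \<in> carrier_vec n"
    and i: "i < n" and j: "j < m + 1"
  shows "append_columns A [x] $$ (i,j) = (if j < m then A $$ (i,j) else x $ i)"
  unfolding append_columns_def mat_of_cols_def using A x i j
  by (auto simp: nth_append less_Suc_eq)

theorem mainTheorem19:
  fixes A :: "real mat" and n m :: nat and xs :: "real vec list"
  assumes "A \<in> carrier_mat n m"
    and "binary_mat A"
    and "real_rank A = binary_rank A"
    and "\<forall>x \<in> set xs. x \<in> carrier_vec n \<and> binary_vec x"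
    and "\<forall>x \<in> set xs. binary_rank (append_columns A [x]) = binary_rank A"
  shows "real_rank (append_columns A xs) = real_rank A"
proof -
  interpret vs: vec_space "TYPE(real)" n .
  have A: "A \<in> carrier_mat n m" using assms(1) .
  have cA: "set (cols A) \<subseteq> carrier_vec n" using A cols_dim by (metis carrier_matD(1))
  have rA: "real_rank A = vs.rank A" unfolding real_rank_def using A by simp
  have key: "x \<in> vs.span (set (cols A))" if xin: "x \<in> set xs" for x
  proof -
    have x: "x \<in> carrier_vec n" "binary_vec x" using assms(4) xin by auto
    define M where "M = append_columns A [x]"
    have Mc: "M \<in> carrier_mat n (m + 1)" 
    proof -
      have "dim_row A = n" "length (cols A @ [x]) = m+1" using A by auto
      thus ?thesis unfolding M_def append_columns_def using mat_of_cols_carrier(1)[of n "cols A @ [x]"] by simp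
    qed
    have bM: "binary_mat M" unfolding binary_mat_def
    proof (intro allI impI)
      fix i j assume "i < dim_row M" "j < dim_col M"
      hence ij: "i < n" "j < m + 1" using Mc by auto
      show "M $$ (i, j) \<in> {0, 1}" unfolding M_def append_col_entries[OF A x(1) ij]
        using assms(2) x A ij unfolding binary_mat_def binary_vec_def by auto
    qed
    have ex: "\<exists>U V. U \<in> carrier_mat (dim_row M) (m+1) \<and>
      V \<in> carrier_mat (m+1) (dim_col M) \<and> binary_mat U \<and> binary_mat V \<and> M = U * V"
      by (rule exI[of _ M], rule exI[of _ "1\<^sub>m (m+1)"]) (use Mc bM binary_one in auto)
    have ex2: "\<exists>k. \<exists>U V. U \<in> carrier_mat (dim_row M) k \<and>
      V \<in> carrier_mat k (dim_col M) \<and> binary_mat U \<and> binary_mat V \<and> M = U * V"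
      using ex by blast
    obtain U V where UV: "U \<in> carrier_mat (dim_row M) (binary_rank M)"
      "V \<in> carrier_mat (binary_rank M) (dim_col M)" "M = U * V"
      using LeastI_ex[OF ex2] unfolding binary_rank_def by blast
    have bR: "binary_rank M = vs.rank A" using assms(3,5) xin rA unfolding M_def by simp
    have U: "U \<in> carrier_mat n (vs.rank A)" using UV(1) bR Mc by simp
    have V: "V \<in> carrier_mat (vs.rank A) (m+1)" using UV(2) bR Mc by simp
    have "vs.rank M \<le> vs.rank U"
      using vs.rank_mono_span[OF Mc U] vs.cols_prod_in_span[OF U V] UV(3) by simp
    also have "\<dots> \<le> vs.rank A" using vs.rank_le_nc[OF U] .
    finally have "vs.rank (mat_of_cols n (cols A @ [x])) \<le> vs.rank A"
      unfolding M_def append_columns_def using A by simp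
    thus ?thesis using vs.in_span_of_rank[OF A x(1)] by blast
  qed
  define C where "C = mat_of_cols n (cols A @ xs)"
  have Cc: "C \<in> carrier_mat n (length (cols A @ xs))" unfolding C_def by (rule mat_of_cols_carrier(1))
  have cC: "cols C = cols A @ xs" unfolding C_def using cA assms(4) by (intro cols_mat_of_cols) auto
  have rC: "real_rank (append_columns A xs) = vs.rank C"
    unfolding real_rank_def append_columns_def C_def using A by simp
  have "set (cols C) \<subseteq> vs.span (set (cols A))" using cC key vs.span_mem[OF cA] by auto
  hence le1: "vs.rank C \<le> vs.rank A" using vs.rank_mono_span[OF Cc A] by simp
  have "set (cols A) \<subseteq> vs.span (set (cols C))" 
  proof -
    have "set (cols C) \<subseteq> carrier_vec n" using Cc cols_dim by (metis carrier_matD(1))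
    moreover have "set (cols A) \<subseteq> set (cols C)" using cC by simp
    ultimately show ?thesis using vs.in_own_span by blast
  qed
  hence le2: "vs.rank A \<le> vs.rank C" using vs.rank_mono_span[OF A Cc] by simp
  show ?thesis using rC rA le1 le2 by simp
qed
end
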